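(* Let $(M,g)$ be a four-dimensional oriented smooth Lorentzian manifold with Levi-Civita connection $\nabla$. Let (a) $K^\mu$ be a smooth vector field with values in $\mathrm{Herm}(2)$ satisfying $K^\mu\tilde K^\nu+K^\nu\tilde K^\mu=2g^{\mu\nu}e$ for all $\mu,\nu$ and $\nabla_\mu\pi_+(K^\mu)=0$; (b) $A_\mu$ and $C_\mu$ be smooth covector fields with values in $\mathfrak{u}(2)$ and $\mathfrak{su}(2)$ respectively; (c) $\Psi:M\to\mathrm{Mat}(2,\mathbb{C})$ be a smooth function. Suppose $$iK^\mu(\nabla_\mu\Psi-C_\mu\Psi+\Psi A_\mu)=0.$$ Then $$\big(\nabla_\mu(\Psi^\dagger iK^\mu\Psi)-[A_\mu,\Psi^\dagger iK^\mu\Psi]\big)-\Psi^\dagger\big(\nabla_\mu\pi_-(iK^\mu)-[C_\mu,\pi_-(iK^\mu)]\big)\Psi=0.$$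
   Context: Repeated indices are summed; Greek indices are raised/lowered with $g$. $e$ is the $2\times2$ identity matrix; $\mathrm{Herm}(2)$ = Hermitian $2\times2$ matrices; $\mathfrak{u}(2)$ = anti-Hermitian $2\times 2$ matrices; $\mathfrak{su}(2)$ = traceless elements of $\mathfrak{u}(2)$; $\dagger$ is the Hermitian conjugate. For $A\in\mathrm{Mat}(2,\mathbb{C})$: $\pi_+(A)=\tfrac12(\operatorname{tr}A)e$, $\pi_-(A)=A-\pi_+(A)$, $\tilde A=\pi_+(A)-\pi_-(A)$. Products of matrix-valued tensor fields are matrix products of components; the covariant derivative of a matrix-valued tensor field $V=v_a\sigma^a$ (Pauli basis $\sigma^0=e,\sigma^1,\sigma^2,\sigma^3$, complex tensor fields $v_a$) is $(\nabla v_a)\sigma^a$; on a matrix-valued function it is the ordinary derivative. *)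

theory Defs
  imports "HOL-Analysis.Analysis"
begin

text \<open>Local (coordinate chart) model: the manifold is represented by an open chart
  domain U in R^4 (coordinates indexed by the numeral type 4); tensor fields are given
  by their component functions in these coordinates.\<close>

type_synonym pt = "real^4"
type_synonym cmat = "complex^2^2"

text \<open>Partial derivative d_i f at x (coordinate direction i).\<close>
definition pd :: "4 \<Rightarrow> (pt \<Rightarrow> 'b::real_normed_vector) \<Rightarrow> pt \<Rightarrow> 'b" where
  "pd i f x = frechet_derivative f (at x) (axis i 1)"

text \<open>C^k on U: continuous for k = 0; differentiable with all partials C^(k-1).\<close>
fun Ck :: "nat \<Rightarrow> (pt \<Rightarrow> 'b::real_normed_vector) \<Rightarrow> pt set \<Rightarrow> bool" where
  "Ck 0 f U = continuous_on U f"
| "Ck (Suc k) f U = (f differentiable_on U \<and> (\<forall>i. Ck k (pd i f) U))"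

definition smooth_on :: "pt set \<Rightarrow> (pt \<Rightarrow> 'b::real_normed_vector) \<Rightarrow> bool" where
  "smooth_on U f = (\<forall>k. Ck k f U)"

text \<open>Lorentzian signature (either sign convention).\<close>
definition eta :: "real \<Rightarrow> real^4^4" where
  "eta s = (\<chi> i j. if i = j then (if i = 1 then s else - s) else 0)"

definition lorentzian :: "real^4^4 \<Rightarrow> bool" where
  "lorentzian G = (transpose G = G \<and>
     (\<exists>P::real^4^4. invertible P \<and> (transpose P ** G ** P = eta 1 \<or> transpose P ** G ** P = eta (-1))))"

text \<open>Inverse metric g^{mu nu} and Christoffel symbols Gamma^l_{m n}.\<close>
definition ginv :: "(pt \<Rightarrow> real^4^4) \<Rightarrow> pt \<Rightarrow> 4 \<Rightarrow> 4 \<Rightarrow> real" where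
  "ginv g x m n = matrix_inv (g x) $ m $ n"

definition christoffel :: "(pt \<Rightarrow> real^4^4) \<Rightarrow> pt \<Rightarrow> 4 \<Rightarrow> 4 \<Rightarrow> 4 \<Rightarrow> real" where
  "christoffel g x l m n = (1/2) * (\<Sum>r\<in>UNIV. ginv g x l r *
      (pd m g x $ r $ n + pd n g x $ r $ m - pd r g x $ m $ n))"

text \<open>Covariant divergence nabla_mu V^mu of a matrix-valued vector field V (components
  V x mu); the covariant derivative acts entrywise (i.e. on the coefficients v_a).\<close>
definition cdiv :: "(pt \<Rightarrow> real^4^4) \<Rightarrow> (pt \<Rightarrow> 4 \<Rightarrow> cmat) \<Rightarrow> pt \<Rightarrow> cmat" where
  "cdiv g V x = (\<Sum>m\<in>UNIV. pd m (\<lambda>y. V y m) x)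
       + (\<Sum>m\<in>UNIV. \<Sum>l\<in>UNIV. christoffel g x m m l *\<^sub>R V x l)"

text \<open>Matrix operations on Mat(2,C).\<close>
definition adj :: "cmat \<Rightarrow> cmat" where
  "adj A = (\<chi> i j. cnj (A $ j $ i))"

definition smul :: "complex \<Rightarrow> cmat \<Rightarrow> cmat" where
  "smul c A = (\<chi> i j. c * A $ i $ j)"

definition tr :: "cmat \<Rightarrow> complex" where
  "tr A = (\<Sum>i\<in>UNIV. A $ i $ i)"

definition pip :: "cmat \<Rightarrow> cmat" where
  "pip A = smul (tr A / 2) (mat 1)"

definition pim :: "cmat \<Rightarrow> cmat" where
  "pim A = A - pip A"

definition tld :: "cmat \<Rightarrow> cmat" where
  "tld A = pip A - pim A"

definition comm :: "cmat \<Rightarrow> cmat \<Rightarrow> cmat" where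
  "comm A B = A ** B - B ** A"

definition herm :: "cmat \<Rightarrow> bool" where "herm A = (adj A = A)"
definition in_u2 :: "cmat \<Rightarrow> bool" where "in_u2 A = (adj A = - A)"
definition in_su2 :: "cmat \<Rightarrow> bool" where "in_su2 A = (in_u2 A \<and> tr A = 0)"

end

theory Submission
  imports Defs
begin

lemma cm_scaleR[simp]: "(c *\<^sub>R (A::cmat)) $ i $ j = of_real c * A $ i $ j"
proof -
  have "(c *\<^sub>R A) $ i $ j = c *\<^sub>R (A $ i $ j)" by simp
  also have "\<dots> = of_real c * A $ i $ j" by (rule scaleR_conv_of_real)
  finally show ?thesis .
qed

lemma bb_mm: "bounded_bilinear ((**) :: cmat \<Rightarrow> cmat \<Rightarrow> cmat)"
proof -
  have "bilinear ((**) :: cmat \<Rightarrow> cmat \<Rightarrow> cmat)"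
    unfolding bilinear_def
    by (auto intro!: linearI simp: matrix_matrix_mult_def vec_eq_iff sum.distrib
        sum_distrib_left algebra_simps scaleR_sum_right)
  then show ?thesis using bilinear_conv_bounded_bilinear by blast
qed

lemma bl_adj: "bounded_linear adj"
  by (rule bounded_linearI') (auto simp: adj_def vec_eq_iff)

lemma bl_smul: "bounded_linear (smul c)"
  by (rule bounded_linearI') (auto simp: smul_def vec_eq_iff algebra_simps)

lemma tr_add: "tr (A + B) = tr A + tr B" by (simp add: tr_def sum.distrib)
lemma tr_scaleR: "tr (r *\<^sub>R A) = r *\<^sub>R tr A" by (simp add: tr_def scaleR_sum_right)
lemma tr_smul: "tr (smul c A) = c * tr A" unfolding tr_def smul_def by (simp add: sum_distrib_left)

lemma bl_pip: "bounded_linear pip"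
  by (rule bounded_linearI') (auto simp: pip_def smul_def tr_add tr_scaleR vec_eq_iff
     algebra_simps add_divide_distrib)

lemma bl_pim: "bounded_linear pim"
  unfolding pim_def by (intro bounded_linear_sub bounded_linear_ident bl_pip)

lemma pd_lin:
  assumes "bounded_linear L" "f differentiable at x"
  shows "pd m (\<lambda>y. L (f y)) x = L (pd m f x)"
proof -
  have "(f has_derivative frechet_derivative f (at x)) (at x)"
    using assms(2) by (rule frechet_derivative_works[THEN iffD1])
  then have "((\<lambda>y. L (f y)) has_derivative (\<lambda>h. L (frechet_derivative f (at x) h))) (at x)"
    by (rule bounded_linear.has_derivative[OF assms(1)])
  then have eq: "(\<lambda>h. L (frechet_derivative f (at x) h)) = frechet_derivative (\<lambda>y. L (f y)) (at x)"
    by (rule frechet_derivative_at)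
  show ?thesis unfolding pd_def eq[symmetric] ..
qed

lemma pd_mm:
  fixes f g :: "pt \<Rightarrow> cmat"
  assumes "f differentiable at x" "g differentiable at x"
  shows "pd m (\<lambda>y. f y ** g y) x = pd m f x ** g x + f x ** pd m g x"
proof -
  have f: "(f has_derivative frechet_derivative f (at x)) (at x)"
    using assms(1) by (rule frechet_derivative_works[THEN iffD1])
  have g: "(g has_derivative frechet_derivative g (at x)) (at x)"
    using assms(2) by (rule frechet_derivative_works[THEN iffD1])
  have "((\<lambda>y. f y ** g y) has_derivative
       (\<lambda>h. f x ** frechet_derivative g (at x) h + frechet_derivative f (at x) h ** g x)) (at x)"
    by (rule bounded_bilinear.FDERIV[OF bb_mm f g])
  then have eq: "(\<lambda>h. f x ** frechet_derivative g (at x) h + frechet_derivative f (at x) h ** g x)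
      = frechet_derivative (\<lambda>y. f y ** g y) (at x)"
    by (rule frechet_derivative_at)
  show ?thesis unfolding pd_def eq[symmetric] by (rule add.commute)
qed

lemma diff_lin:
  assumes "bounded_linear L" "f differentiable at x"
  shows "(\<lambda>y. L (f y)) differentiable at x"
proof -
  have "(f has_derivative frechet_derivative f (at x)) (at x)"
    using assms(2) by (rule frechet_derivative_works[THEN iffD1])
  then have "((\<lambda>y. L (f y)) has_derivative (\<lambda>h. L (frechet_derivative f (at x) h))) (at x)"
    by (rule bounded_linear.has_derivative[OF assms(1)])
  then show ?thesis by (rule differentiableI)
qed

lemma diff_mm:
  fixes f g :: "pt \<Rightarrow> cmat"
  assumes "f differentiable at x" "g differentiable at x"
  shows "(\<lambda>y. f y ** g y) differentiable at x"
proof -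
  have f: "(f has_derivative frechet_derivative f (at x)) (at x)"
    using assms(1) by (rule frechet_derivative_works[THEN iffD1])
  have g: "(g has_derivative frechet_derivative g (at x)) (at x)"
    using assms(2) by (rule frechet_derivative_works[THEN iffD1])
  have "((\<lambda>y. f y ** g y) has_derivative
       (\<lambda>h. f x ** frechet_derivative g (at x) h + frechet_derivative f (at x) h ** g x)) (at x)"
    by (rule bounded_bilinear.FDERIV[OF bb_mm f g])
  then show ?thesis by (rule differentiableI)
qed

lemma smooth_diff:
  assumes "smooth_on U f" "open U" "x \<in> U"
  shows "f differentiable at x"
proof -
  have "Ck (Suc 0) f U" using assms(1) unfolding smooth_on_def by blast
  then have "f differentiable_on U" by simp
  then show ?thesis using differentiable_on_eq_differentiable_at[OF assms(2)] assms(3) by blast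
qed

lemmas mm_sum_l = bounded_bilinear.sum_left[OF bb_mm]
lemmas mm_sum_r = bounded_bilinear.sum_right[OF bb_mm]
lemmas mm_add_l = bounded_bilinear.add_left[OF bb_mm]
lemmas mm_add_r = bounded_bilinear.add_right[OF bb_mm]
lemmas mm_diff_l = bounded_bilinear.diff_left[OF bb_mm]
lemmas mm_diff_r = bounded_bilinear.diff_right[OF bb_mm]
lemmas mm_minus_l = bounded_bilinear.minus_left[OF bb_mm]
lemmas mm_minus_r = bounded_bilinear.minus_right[OF bb_mm]

lemma adj_mm: "adj (A ** B) = adj B ** adj (A::cmat)"
  by (simp add: adj_def vec_eq_iff matrix_matrix_mult_def mult.commute)

lemma adj_smul: "adj (smul c A) = smul (cnj c) (adj A)"
  by (simp add: adj_def vec_eq_iff smul_def)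

lemma smul_minus: "smul (- c) A = - smul c A"
  by (simp add: vec_eq_iff smul_def)

lemma pip_smul: "pip (smul c A) = smul c (pip A)"
  unfolding pip_def tr_smul by (simp add: vec_eq_iff smul_def mat_def)

lemma key:
  fixes Q P A C K :: cmat
  shows "(A ** Q - Q ** C) ** K ** P + Q ** K ** (C ** P - P ** A) - comm A (Q ** K ** P)
     + Q ** comm C K ** P = 0"
  by (simp add: vec_eq_iff matrix_matrix_mult_def sum_2 comm_def algebra_simps)

lemma smul_mm_l: "smul c A ** B = smul c (A ** (B::cmat))"
  by (simp add: vec_eq_iff smul_def matrix_matrix_mult_def sum_distrib_left mult.assoc)
lemma smul_mm_r: "A ** smul c B = smul c (A ** (B::cmat))"
  by (simp add: vec_eq_iff smul_def matrix_matrix_mult_def sum_distrib_left algebra_simps)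

lemma pip_commute: "pip K ** C = C ** pip K"
  unfolding pip_def by (simp add: smul_mm_l smul_mm_r)

lemma comm_pim: "comm C (pim K) = comm C K"
  unfolding comm_def pim_def by (simp add: mm_diff_l mm_diff_r pip_commute)

theorem theorem3:
  fixes U :: "pt set" and g :: "pt \<Rightarrow> real^4^4"
    and K A C :: "pt \<Rightarrow> 4 \<Rightarrow> cmat" and \<Psi> :: "pt \<Rightarrow> cmat"
  assumes U: "open U"
    and g_smooth: "smooth_on U g"
    and g_lor: "\<forall>x\<in>U. lorentzian (g x)"
    and K_smooth: "\<forall>m. smooth_on U (\<lambda>x. K x m)"
    and K_herm: "\<forall>x\<in>U. \<forall>m. herm (K x m)"
    and K_cliff: "\<forall>x\<in>U. \<forall>m n. K x m ** tld (K x n) + K x n ** tld (K x m)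
                      = (2 * ginv g x m n) *\<^sub>R mat 1"
    and K_div: "\<forall>x\<in>U. cdiv g (\<lambda>y m. pip (K y m)) x = 0"
    and A_smooth: "\<forall>m. smooth_on U (\<lambda>x. A x m)"
    and A_u2: "\<forall>x\<in>U. \<forall>m. in_u2 (A x m)"
    and C_smooth: "\<forall>m. smooth_on U (\<lambda>x. C x m)"
    and C_su2: "\<forall>x\<in>U. \<forall>m. in_su2 (C x m)"
    and Psi_smooth: "smooth_on U \<Psi>"
    and Dirac: "\<forall>x\<in>U. (\<Sum>m\<in>UNIV. smul \<i> (K x m) **
                 (pd m \<Psi> x - C x m ** \<Psi> x + \<Psi> x ** A x m)) = 0"
  shows "\<forall>x\<in>U.
    (cdiv g (\<lambda>y m. adj (\<Psi> y) ** smul \<i> (K y m) ** \<Psi> y) x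
       - (\<Sum>m\<in>UNIV. comm (A x m) (adj (\<Psi> x) ** smul \<i> (K x m) ** \<Psi> x)))
    - adj (\<Psi> x) ** (cdiv g (\<lambda>y m. pim (smul \<i> (K y m))) x
       - (\<Sum>m\<in>UNIV. comm (C x m) (pim (smul \<i> (K x m))))) ** \<Psi> x = 0"
proof (intro ballI)
  fix x assume xU: "x \<in> U"
  define P where "P = \<Psi> x"
  define Q where "Q = adj P"
  define D where "D m = pd m \<Psi> x" for m
  define Kt where "Kt m = smul \<i> (K x m)" for m
  define Kd where "Kd m = pd m (\<lambda>y. K y m) x" for m
  define G where "G m l = christoffel g x m m l" for m l
  define Z where "Z = (\<Sum>m\<in>UNIV. Kd m) + (\<Sum>m\<in>UNIV. \<Sum>l\<in>UNIV. G m l *\<^sub>R K x l)"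
  have dPsi: "\<Psi> differentiable at x" using smooth_diff[OF Psi_smooth U xU] .
  have dK: "(\<lambda>y. K y m) differentiable at x" for m using smooth_diff[OF _ U xU] K_smooth by blast
  have dadj: "(\<lambda>y. adj (\<Psi> y)) differentiable at x" by (rule diff_lin[OF bl_adj dPsi])
  have dsK: "(\<lambda>y. smul \<i> (K y m)) differentiable at x" for m by (rule diff_lin[OF bl_smul dK])
  have pdJ: "pd m (\<lambda>y. adj (\<Psi> y) ** smul \<i> (K y m) ** \<Psi> y) x
      = adj (D m) ** Kt m ** P + Q ** smul \<i> (Kd m) ** P + Q ** Kt m ** D m" for m
  proof -
    have "pd m (\<lambda>y. adj (\<Psi> y) ** smul \<i> (K y m) ** \<Psi> y) x
       = pd m (\<lambda>y. adj (\<Psi> y) ** smul \<i> (K y m)) x ** \<Psi> x + (adj (\<Psi> x) ** smul \<i> (K x m)) ** pd m \<Psi> x"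
      by (rule pd_mm[OF diff_mm[OF dadj dsK] dPsi])
    also have "pd m (\<lambda>y. adj (\<Psi> y) ** smul \<i> (K y m)) x
       = pd m (\<lambda>y. adj (\<Psi> y)) x ** smul \<i> (K x m) + adj (\<Psi> x) ** pd m (\<lambda>y. smul \<i> (K y m)) x"
      by (rule pd_mm[OF dadj dsK])
    also have "pd m (\<lambda>y. adj (\<Psi> y)) x = adj (D m)"
      unfolding D_def by (rule pd_lin[OF bl_adj dPsi])
    also have "pd m (\<lambda>y. smul \<i> (K y m)) x = smul \<i> (Kd m)"
      unfolding Kd_def by (rule pd_lin[OF bl_smul dK])
    finally show ?thesis unfolding P_def Q_def Kt_def D_def by (simp add: mm_add_l)
  qed
  define L where "L X = Q ** smul \<i> X ** P" for X
  have bL: "bounded_linear L"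
  proof -
    have "bounded_linear (\<lambda>X. Q ** smul \<i> X)"
      using bounded_linear_compose[OF bounded_bilinear.bounded_linear_right[OF bb_mm] bl_smul] .
    from bounded_linear_compose[OF bounded_bilinear.bounded_linear_left[OF bb_mm] this]
    show ?thesis unfolding L_def[abs_def] .
  qed
  define L2 where "L2 X = pim (smul \<i> X)" for X
  have bL2: "bounded_linear L2"
    unfolding L2_def[abs_def] by (rule bounded_linear_compose[OF bl_pim bl_smul])
  have H1: "cdiv g (\<lambda>y m. adj (\<Psi> y) ** smul \<i> (K y m) ** \<Psi> y) x
      = (\<Sum>m\<in>UNIV. adj (D m) ** Kt m ** P + Q ** Kt m ** D m) + L Z"
  proof -
    have "L Z = (\<Sum>m\<in>UNIV. L (Kd m)) + (\<Sum>m\<in>UNIV. \<Sum>l\<in>UNIV. G m l *\<^sub>R L (K x l))"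
      unfolding Z_def by (simp add: linear_add[OF bounded_linear.linear[OF bL]] linear_sum[OF bounded_linear.linear[OF bL]]
          linear_scale[OF bounded_linear.linear[OF bL]])
    then show ?thesis
      unfolding cdiv_def pdJ by (simp add: L_def G_def Kt_def P_def Q_def sum.distrib algebra_simps)
  qed
  have pd2: "pd m (\<lambda>y. pim (smul \<i> (K y m))) x = L2 (Kd m)" for m
    unfolding Kd_def L2_def using pd_lin[OF bL2 dK] by (simp add: L2_def)
  have H2: "cdiv g (\<lambda>y m. pim (smul \<i> (K y m))) x = L2 Z"
  proof -
    have "L2 Z = (\<Sum>m\<in>UNIV. L2 (Kd m)) + (\<Sum>m\<in>UNIV. \<Sum>l\<in>UNIV. G m l *\<^sub>R L2 (K x l))"
      unfolding Z_def by (simp add: linear_add[OF bounded_linear.linear[OF bL2]]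
        linear_sum[OF bounded_linear.linear[OF bL2]] linear_scale[OF bounded_linear.linear[OF bL2]])
    then show ?thesis unfolding cdiv_def pd2 by (simp add: L2_def G_def)
  qed
  have pd3: "pd m (\<lambda>y. pip (K y m)) x = pip (Kd m)" for m
    unfolding Kd_def using pd_lin[OF bl_pip dK] .
  have H3: "pip Z = 0"
  proof -
    have "cdiv g (\<lambda>y m. pip (K y m)) x = pip Z"
      unfolding cdiv_def pd3 Z_def
      by (simp add: linear_add[OF bounded_linear.linear[OF bl_pip]] linear_sum[OF bounded_linear.linear[OF bl_pip]]
          linear_scale[OF bounded_linear.linear[OF bl_pip]] G_def)
    then show ?thesis using K_div xU by simp
  qed
  have H4: "L2 Z = smul \<i> Z"
    unfolding L2_def pim_def pip_smul H3 using linear_0[OF bounded_linear.linear[OF bl_smul]] by simp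
  have Dir: "(\<Sum>m\<in>UNIV. Kt m ** (D m - C x m ** P + P ** A x m)) = 0"
    using Dirac xU unfolding Kt_def D_def P_def by simp
  have H6: "(\<Sum>m\<in>UNIV. Kt m ** D m) = (\<Sum>m\<in>UNIV. Kt m ** (C x m ** P - P ** A x m))"
  proof -
    have "Kt m ** (D m - C x m ** P + P ** A x m) = Kt m ** D m - Kt m ** (C x m ** P - P ** A x m)" for m
      by (simp add: mm_diff_r mm_add_r)
    with Dir have "(\<Sum>m\<in>UNIV. Kt m ** D m - Kt m ** (C x m ** P - P ** A x m)) = 0" by simp
    then show ?thesis by (simp add: sum_subtractf)
  qed
  have ladj: "linear adj" by (rule bounded_linear.linear[OF bl_adj])
  have H5: "(\<Sum>m\<in>UNIV. adj (D m) ** Kt m) = (\<Sum>m\<in>UNIV. (A x m ** Q - Q ** C x m) ** Kt m)"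
  proof -
    have aK: "adj (Kt m) = - Kt m" for m
      using K_herm xU unfolding Kt_def herm_def by (simp add: adj_smul smul_minus)
    have aC: "adj (C x m) = - C x m" for m using C_su2 xU unfolding in_su2_def in_u2_def by simp
    have aA: "adj (A x m) = - A x m" for m using A_u2 xU unfolding in_u2_def by simp
    have "adj (Kt m ** (D m - C x m ** P + P ** A x m))
        = (A x m ** Q - Q ** C x m) ** Kt m - adj (D m) ** Kt m" for m
      unfolding adj_mm aK linear_add[OF ladj] linear_diff[OF ladj] aC aA Q_def
      by (simp add: mm_minus_r mm_minus_l mm_diff_l mm_add_l algebra_simps)
    then have "adj (\<Sum>m\<in>UNIV. Kt m ** (D m - C x m ** P + P ** A x m))
       = (\<Sum>m\<in>UNIV. (A x m ** Q - Q ** C x m) ** Kt m - adj (D m) ** Kt m)"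
      by (simp add: linear_sum[OF ladj])
    then have "(\<Sum>m\<in>UNIV. (A x m ** Q - Q ** C x m) ** Kt m - adj (D m) ** Kt m) = 0"
      using Dir linear_0[OF ladj] by simp
    then have "(\<Sum>m\<in>UNIV. (A x m ** Q - Q ** C x m) ** Kt m) - (\<Sum>m\<in>UNIV. adj (D m) ** Kt m) = 0"
      by (simp add: sum_subtractf)
    then show ?thesis by simp
  qed
  have E1: "(\<Sum>m\<in>UNIV. adj (D m) ** Kt m ** P) = (\<Sum>m\<in>UNIV. (A x m ** Q - Q ** C x m) ** Kt m ** P)"
  proof -
    have "(\<Sum>m\<in>UNIV. adj (D m) ** Kt m ** P) = (\<Sum>m\<in>UNIV. adj (D m) ** Kt m) ** P" by (simp add: mm_sum_l)
    also have "\<dots> = (\<Sum>m\<in>UNIV. (A x m ** Q - Q ** C x m) ** Kt m) ** P" by (simp add: H5)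
    also have "\<dots> = (\<Sum>m\<in>UNIV. (A x m ** Q - Q ** C x m) ** Kt m ** P)" by (simp add: mm_sum_l)
    finally show ?thesis .
  qed
  have E2: "(\<Sum>m\<in>UNIV. Q ** Kt m ** D m) = (\<Sum>m\<in>UNIV. Q ** Kt m ** (C x m ** P - P ** A x m))"
  proof -
    have "(\<Sum>m\<in>UNIV. Q ** Kt m ** D m) = Q ** (\<Sum>m\<in>UNIV. Kt m ** D m)" by (simp add: mm_sum_r matrix_mul_assoc)
    also have "\<dots> = Q ** (\<Sum>m\<in>UNIV. Kt m ** (C x m ** P - P ** A x m))" by (simp add: H6)
    also have "\<dots> = (\<Sum>m\<in>UNIV. Q ** Kt m ** (C x m ** P - P ** A x m))" by (simp add: mm_sum_r matrix_mul_assoc)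
    finally show ?thesis .
  qed
  have E3: "Q ** (\<Sum>m\<in>UNIV. comm (C x m) (pim (Kt m))) ** P = (\<Sum>m\<in>UNIV. Q ** comm (C x m) (Kt m) ** P)"
    by (simp add: mm_sum_r mm_sum_l comm_pim)
  have "(cdiv g (\<lambda>y m. adj (\<Psi> y) ** smul \<i> (K y m) ** \<Psi> y) x
       - (\<Sum>m\<in>UNIV. comm (A x m) (adj (\<Psi> x) ** smul \<i> (K x m) ** \<Psi> x)))
    - adj (\<Psi> x) ** (cdiv g (\<lambda>y m. pim (smul \<i> (K y m))) x
       - (\<Sum>m\<in>UNIV. comm (C x m) (pim (smul \<i> (K x m))))) ** \<Psi> x
    = (\<Sum>m\<in>UNIV. adj (D m) ** Kt m ** P) + (\<Sum>m\<in>UNIV. Q ** Kt m ** D m)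
      - (\<Sum>m\<in>UNIV. comm (A x m) (Q ** Kt m ** P)) + Q ** (\<Sum>m\<in>UNIV. comm (C x m) (pim (Kt m))) ** P"
    unfolding H1 H2 H4 by (simp add: L_def mm_diff_l mm_diff_r sum.distrib P_def Q_def Kt_def)
  also have "\<dots> = (\<Sum>m\<in>UNIV. (A x m ** Q - Q ** C x m) ** Kt m ** P + Q ** Kt m ** (C x m ** P - P ** A x m)
      - comm (A x m) (Q ** Kt m ** P) + Q ** comm (C x m) (Kt m) ** P)"
    unfolding E1 E2 E3 by (simp add: sum.distrib sum_subtractf)
  also have "\<dots> = 0" by (simp add: key)
  finally show "(cdiv g (\<lambda>y m. adj (\<Psi> y) ** smul \<i> (K y m) ** \<Psi> y) x
       - (\<Sum>m\<in>UNIV. comm (A x m) (adj (\<Psi> x) ** smul \<i> (K x m) ** \<Psi> x)))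
    - adj (\<Psi> x) ** (cdiv g (\<lambda>y m. pim (smul \<i> (K y m))) x
       - (\<Sum>m\<in>UNIV. comm (C x m) (pim (smul \<i> (K x m))))) ** \<Psi> x = 0" .
qed

end
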